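(* Let $f(1),f(2),\dots$ be a non-negative, non-decreasing sequence of real numbers with $$\sum_{n=1}^{\infty}\frac{f(n)}{n^2}=\infty.$$ Then there exists a sequence $b(1),b(2),\dots$ of rational numbers such that $$b(n+m)\le b(n)+b(m)+f(n+m)\quad\text{for all integers } n,m\ge 1,$$ and such that the map $n\mapsto b(n)/n$ is a bijection from the positive integers onto $\mathbb{Q}$, i.e. every rational number occurs exactly once among the values $b(n)/n$. *)

theory Defs
  imports "HOL-Analysis.Analysis"
begin

end

theory Submission
  imports Defs
begin

definition nxt :: "(nat \<Rightarrow> real) \<Rightarrow> nat \<Rightarrow> rat list \<Rightarrow> rat" where
"nxt f N L = (if L = [] then from_nat (LEAST k. from_nat k \<notin> set L) else
   (if real_of_rat (from_nat (LEAST k. from_nat k \<notin> set L)) \<le> real_of_rat (hd L) + f N / (real N)^2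
    then from_nat (LEAST k. from_nat k \<notin> set L)
    else (SOME x. x \<notin> set L \<and> real_of_rat (hd L) + f N / (real N)^2 - (1/2)^N < real_of_rat x
            \<and> real_of_rat x \<le> real_of_rat (hd L) + f N / (real N)^2)))"

primrec seqL :: "(nat \<Rightarrow> real) \<Rightarrow> nat \<Rightarrow> rat list" where
"seqL f 0 = []" | "seqL f (Suc N) = nxt f (Suc N) (seqL f N) # seqL f N"

definition qq :: "(nat \<Rightarrow> real) \<Rightarrow> nat \<Rightarrow> rat" where "qq f N = hd (seqL f N)"

lemma ex_unused: "finite (F::rat set) \<Longrightarrow> \<exists>k. (from_nat k :: rat) \<notin> F"
proof -
  assume "finite F"
  then obtain x :: rat where "x \<notin> F" using ex_new_if_finite[OF infinite_UNIV_char_0] by blast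
  then show ?thesis by (metis from_nat_to_nat)
qed

lemma least_unused: "(from_nat (LEAST k. from_nat k \<notin> set L) :: rat) \<notin> set L"
  using ex_unused[of "set L"] by (metis (mono_tags, lifting) LeastI_ex finite_set)

lemma ex_near:
  fixes B eps :: real and F :: "rat set"
  assumes "finite F" "eps > 0"
  shows "\<exists>x. x \<notin> F \<and> B - eps < real_of_rat x \<and> real_of_rat x \<le> B"
proof -
  define A where "A = insert (B - eps) (real_of_rat ` {y\<in>F. real_of_rat y < B})"
  define a where "a = Max A"
  have fin: "finite A" using assms(1) unfolding A_def by auto
  have "a < B" unfolding a_def using fin assms(2) by (subst Max_less_iff) (auto simp: A_def)
  have "B - eps \<le> a" unfolding a_def using fin by (auto simp: A_def)
  obtain z where "z \<in> \<rat>" "a < z" "z < B" using Rats_dense_in_real[OF \<open>a < B\<close>] by blast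
  then obtain x where x: "z = real_of_rat x" by (auto elim: Rats_cases)
  have "x \<notin> F"
  proof
    assume "x \<in> F"
    then have "real_of_rat x \<in> A" using \<open>z < B\<close> x by (auto simp: A_def)
    then have "real_of_rat x \<le> a" unfolding a_def using fin by auto
    then show False using \<open>a < z\<close> x by simp
  qed
  then show ?thesis using x \<open>a < z\<close> \<open>z < B\<close> \<open>B - eps \<le> a\<close> by (intro exI[of _ x]) auto
qed

lemma nxt_cases:
  fixes f :: "nat \<Rightarrow> real" and N :: nat and L :: "rat list"
  assumes "L \<noteq> []"
  defines "B \<equiv> real_of_rat (hd L) + f N / (real N)^2"
  defines "r \<equiv> (from_nat (LEAST k. from_nat k \<notin> set L) :: rat)"
  shows "nxt f N L \<notin> set L \<and> real_of_rat (nxt f N L) \<le> B \<and> (real_of_rat r \<le> B \<longrightarrow> nxt f N L = r)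
     \<and> (\<not> real_of_rat r \<le> B \<longrightarrow> B - (1/2)^N < real_of_rat (nxt f N L))"
proof (cases "real_of_rat r \<le> B")
  case True
  then show ?thesis using assms least_unused[of L] by (simp add: nxt_def)
next
  case False
  have ex: "\<exists>x. x \<notin> set L \<and> B - (1/2)^N < real_of_rat x \<and> real_of_rat x \<le> B"
    by (rule ex_near) auto
  have "nxt f N L = (SOME x. x \<notin> set L \<and> B - (1/2)^N < real_of_rat x \<and> real_of_rat x \<le> B)"
    using False assms by (simp add: nxt_def)
  with someI_ex[OF ex] False show ?thesis by simp
qed

lemma len_seqL: "length (seqL f N) = N" by (induction N) auto

lemma qq_Suc: "qq f (Suc N) = nxt f (Suc N) (seqL f N)" by (simp add: qq_def)

lemma set_seqL: "set (seqL f N) = qq f ` {1..N}"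
proof (induction N)
  case 0 then show ?case by simp
next
  case (Suc N)
  have "{1..Suc N} = insert (Suc N) {1..N}" by auto
  then show ?case using Suc by (simp add: qq_Suc)
qed

lemma seqL_mono: "N \<le> M \<Longrightarrow> set (seqL f N) \<subseteq> set (seqL f M)"
  by (induction M rule: dec_induct) auto

lemma qq_new: "qq f (Suc N) \<notin> set (seqL f N)"
proof (cases "N = 0")
  case True then show ?thesis by simp
next
  case False
  then have "seqL f N \<noteq> []" using len_seqL[of f N] by auto
  then show ?thesis using nxt_cases[of "seqL f N" f "Suc N"] by (simp add: qq_Suc)
qed

lemma qq_rec: "N \<ge> 1 \<Longrightarrow> real_of_rat (qq f (Suc N)) \<le> real_of_rat (qq f N) + f (Suc N) / (real (Suc N))^2"
proof -
  assume "N \<ge> 1"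
  then have "seqL f N \<noteq> []" using len_seqL[of f N] by auto
  then show ?thesis using nxt_cases[of "seqL f N" f "Suc N"] by (simp add: qq_Suc qq_def)
qed


lemma geom_half: "(\<Sum>i<n. (1/2::real)^(Suc i)) \<le> 1"
proof -
  have "(\<Sum>i<n. (1/2::real)^(Suc i)) = 1 - (1/2)^n" by (induction n) auto
  then show ?thesis by simp
qed

lemma sum_split_add: "sum (g::nat\<Rightarrow>real) {..<a+b} = sum g {..<a} + (\<Sum>i<b. g (a+i))"
  by (induction b) auto

lemma place:
  fixes f :: "nat \<Rightarrow> real"
  assumes nonneg: "\<And>n. n \<ge> 1 \<Longrightarrow> f n \<ge> 0"
    and diverge: "\<not> summable (\<lambda>n. f (Suc n) / (real (Suc n))\<^sup>2)"
    and A: "\<forall>j<k. (from_nat j::rat) \<in> set (seqL f N0)"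
  shows "\<exists>N. (from_nat k::rat) \<in> set (seqL f N)"
proof (rule ccontr)
  assume nk: "\<not> ?thesis"
  define g where "g = (\<lambda>n. f (Suc n) / (real (Suc n))\<^sup>2)"
  have gnn: "g n \<ge> 0" for n unfolding g_def using nonneg[of "Suc n"] by simp
  define N1 where "N1 = Suc N0"
  define r where "r = (from_nat k :: rat)"
  define Q where "Q = (\<lambda>n. real_of_rat (qq f n))"
  have least: "(LEAST k'. (from_nat k'::rat) \<notin> set (seqL f N)) = k" if "N \<ge> N1" for N
  proof (rule Least_equality)
    show "(from_nat k::rat) \<notin> set (seqL f N)" using nk by blast
  next
    fix y assume y: "(from_nat y::rat) \<notin> set (seqL f N)"
    show "k \<le> y"
    proof (rule ccontr)
      assume "\<not> k \<le> y"
      then have "(from_nat y::rat) \<in> set (seqL f N0)" using A by auto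
      then show False using y seqL_mono[of N0 N f] that N1_def by auto
    qed
  qed
  have step: "Q (Suc N) \<ge> Q N + g N - (1/2)^(Suc N) \<and> Q (Suc N) \<le> real_of_rat r" if "N \<ge> N1" for N
  proof -
    have ne: "seqL f N \<noteq> []" using len_seqL[of f N] that N1_def by auto
    note c = nxt_cases[OF ne, of f "Suc N", unfolded least[OF that], folded r_def]
    have "\<not> real_of_rat r \<le> real_of_rat (hd (seqL f N)) + f (Suc N) / (real (Suc N))\<^sup>2"
    proof
      assume "real_of_rat r \<le> real_of_rat (hd (seqL f N)) + f (Suc N) / (real (Suc N))\<^sup>2"
      then have "nxt f (Suc N) (seqL f N) = r" using c by blast
      then have "r \<in> set (seqL f (Suc N))" by simp
      then show False using nk r_def by blast
    qed
    then show ?thesis using c unfolding Q_def g_def by (auto simp: qq_Suc qq_def)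
  qed
  have grow: "Q (N1 + n) \<ge> Q N1 + (\<Sum>i<n. g (N1+i)) - (\<Sum>i<n. (1/2)^(Suc i))" for n
  proof (induction n)
    case 0 then show ?case by simp
  next
    case (Suc n)
    have s: "Q (Suc (N1+n)) \<ge> Q (N1+n) + g (N1+n) - (1/2)^(Suc (N1+n))" using step[of "N1+n"] by simp
    have "(1/2::real)^(Suc (N1+n)) \<le> (1/2)^(Suc n)" by (rule power_decreasing) auto
    then have "Q (N1 + Suc n) \<ge> Q (N1+n) + g (N1+n) - (1/2)^(Suc n)" using s
      unfolding add_Suc_right by linarith
    then show ?case using Suc unfolding sum.lessThan_Suc by linarith
  qed
  define C where "C = real_of_rat r - Q N1 + 1"
  have bnd: "(\<Sum>i<Suc n. g (N1+i)) \<le> C" for n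
  proof -
    have "Q (N1 + Suc n) \<le> real_of_rat r" using step[of "N1+n"] by simp
    then show ?thesis using grow[of "Suc n"] geom_half[of "Suc n"] unfolding C_def by linarith
  qed
  have "summable g"
  proof (rule summableI_nonneg_bounded[where x="sum g {..<N1} + C"])
    show "0 \<le> g n" for n by (rule gnn)
    fix M
    have "sum g {..<M} \<le> sum g {..<N1 + Suc M}"
      by (rule sum_mono2) (auto simp: gnn)
    also have "\<dots> = sum g {..<N1} + (\<Sum>i<Suc M. g (N1+i))" by (rule sum_split_add)
    also have "\<dots> \<le> sum g {..<N1} + C" using bnd[of M] by simp
    finally show "sum g {..<M} \<le> sum g {..<N1} + C" .
  qed
  then show False using diverge unfolding g_def by simp
qed

lemma all_placed:
  fixes f :: "nat \<Rightarrow> real"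
  assumes nonneg: "\<And>n. n \<ge> 1 \<Longrightarrow> f n \<ge> 0"
    and diverge: "\<not> summable (\<lambda>n. f (Suc n) / (real (Suc n))\<^sup>2)"
  shows "\<exists>N. \<forall>j<k. (from_nat j::rat) \<in> set (seqL f N)"
proof (induction k)
  case 0 then show ?case by simp
next
  case (Suc k)
  then obtain N0 where N0: "\<forall>j<k. (from_nat j::rat) \<in> set (seqL f N0)" by blast
  obtain N' where N': "(from_nat k::rat) \<in> set (seqL f N')" using place[OF nonneg diverge N0] by blast
  have "\<forall>j<Suc k. (from_nat j::rat) \<in> set (seqL f (max N0 N'))"
  proof (intro allI impI)
    fix j assume "j < Suc k"
    then consider "j < k" | "j = k" by linarith
    then show "(from_nat j::rat) \<in> set (seqL f (max N0 N'))"
    proof cases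
      case 1 then show ?thesis using N0 seqL_mono[of N0 "max N0 N'" f] by auto
    next
      case 2 then show ?thesis using N' seqL_mono[of N' "max N0 N'" f] by auto
    qed
  qed
  then show ?case by blast
qed


lemma H_bound:
  fixes f :: "nat \<Rightarrow> real"
  assumes nonneg: "\<And>n. n \<ge> 1 \<Longrightarrow> f n \<ge> 0"
    and mono: "\<And>n. n \<ge> 1 \<Longrightarrow> f n \<le> f (Suc n)"
    and "1 \<le> n" "n \<le> N"
  shows "(\<Sum>j=1..N. f j / (real j)^2) - (\<Sum>j=1..n. f j / (real j)^2) \<le> f N * (1/real n - 1/real N)"
  using assms(4)
proof (induction N rule: dec_induct)
  case base then show ?case by simp
next
  case (step N)
  have N1: "N \<ge> 1" using step assms(3) by simp
  have a: "f N * (1/real n - 1/real N) \<le> f (Suc N) * (1/real n - 1/real N)"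
    apply (rule mult_right_mono) using mono[OF N1] step(1) assms(3) by (auto simp: field_simps)
  have b0: "1 / (real (Suc N))^2 \<le> 1/real N - 1/real (Suc N)"
  proof -
    have e1: "1/real N - 1/real (Suc N) = 1/(real N * real (Suc N))" using N1 by (simp add: field_simps)
    have "1/(real (Suc N))^2 \<le> 1/(real N * real (Suc N))"
      by (rule frac_le) (use N1 in \<open>auto simp: power2_eq_square\<close>)
    then show ?thesis using e1 by simp
  qed
  have b: "f (Suc N) / (real (Suc N))^2 \<le> f (Suc N) * (1/real N - 1/real (Suc N))"
    using mult_left_mono[OF b0 nonneg[of "Suc N"]] by simp
  have e: "(\<Sum>j=1..Suc N. f j / (real j)^2) = (\<Sum>j=1..N. f j / (real j)^2) + f (Suc N) / (real (Suc N))^2"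
    by simp
  have "f (Suc N) * (1/real n - 1/real N) + f (Suc N) * (1/real N - 1/real (Suc N))
        = f (Suc N) * (1/real n - 1/real (Suc N))" by (simp add: algebra_simps)
  then show ?case using step(3) a b e by linarith
qed

lemma main_ineq:
  fixes f :: "nat \<Rightarrow> real"
  assumes nonneg: "\<And>n. n \<ge> 1 \<Longrightarrow> f n \<ge> 0"
    and mono: "\<And>n. n \<ge> 1 \<Longrightarrow> f n \<le> f (Suc n)"
    and n: "n \<ge> 1" and m: "m \<ge> 1"
  shows "real (n+m) * real_of_rat (qq f (n+m)) \<le> real n * real_of_rat (qq f n) + real m * real_of_rat (qq f m) + f (n+m)"
proof -
  define H where "H = (\<lambda>N. \<Sum>j=1..N. f j / (real j)^2)"
  define Q where "Q = (\<lambda>n. real_of_rat (qq f n))"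
  define D where "D = (\<lambda>N. H N - Q N)"
  have Dmono: "D a \<le> D b" if "1 \<le> a" "a \<le> b" for a b
    using that(2)
  proof (induction b rule: dec_induct)
    case base then show ?case by simp
  next
    case (step k)
    have "Q (Suc k) \<le> Q k + f (Suc k) / (real (Suc k))^2" unfolding Q_def
      using qq_rec[of k f] step(1) that(1) by simp
    moreover have "H (Suc k) = H k + f (Suc k) / (real (Suc k))^2" unfolding H_def by simp
    ultimately show ?case using step(3) unfolding D_def by linarith
  qed
  define N where "N = n + m"
  have hn: "H N - H n \<le> f N * (1/real n - 1/real N)"
    unfolding H_def by (rule H_bound[where f=f, OF nonneg mono]) (use n N_def in auto)
  have hm: "H N - H m \<le> f N * (1/real m - 1/real N)"
    unfolding H_def by (rule H_bound[where f=f, OF nonneg mono]) (use m N_def in auto)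
  have hn': "real n * (H N - H n) \<le> real n * (f N * (1/real n - 1/real N))"
    by (rule mult_left_mono[OF hn]) simp
  have hm': "real m * (H N - H m) \<le> real m * (f N * (1/real m - 1/real N))"
    by (rule mult_left_mono[OF hm]) simp
  have sumf: "real n * (f N * (1/real n - 1/real N)) + real m * (f N * (1/real m - 1/real N)) = f N"
  proof -
    have a1: "real n * (1/real n - 1/real N) = 1 - real n / real N" using n by (simp add: field_simps)
    have a2: "real m * (1/real m - 1/real N) = 1 - real m / real N" using m by (simp add: field_simps)
    have a3: "real n / real N + real m / real N = 1" using n unfolding N_def by (simp add: add_divide_distrib[symmetric])
    have "real n * (f N * (1/real n - 1/real N)) + real m * (f N * (1/real m - 1/real N))
       = f N * (real n * (1/real n - 1/real N) + real m * (1/real m - 1/real N))" by (simp add: algebra_simps)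
    also have "\<dots> = f N" using a1 a2 a3 by simp
    finally show ?thesis .
  qed
  have d1: "real n * D n \<le> real n * D N" by (rule mult_left_mono) (use Dmono n N_def in auto)
  have d2: "real m * D m \<le> real m * D N" by (rule mult_left_mono) (use Dmono m N_def in auto)
  have "real N * Q N = real n * H N + real m * H N - (real n * D N + real m * D N)"
    unfolding D_def N_def by (simp add: algebra_simps)
  moreover have "real n * Q n = real n * H n - real n * D n" unfolding D_def by (simp add: algebra_simps)
  moreover have "real m * Q m = real m * H m - real m * D m" unfolding D_def by (simp add: algebra_simps)
  ultimately have "real N * Q N \<le> real n * Q n + real m * Q m + f N"
    using hn' hm' sumf d1 d2 by (simp add: algebra_simps) 
  then show ?thesis unfolding Q_def N_def .
qed

theorem theorem5p6:
  fixes f :: "nat \<Rightarrow> real"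
  assumes nonneg: "\<And>n. n \<ge> 1 \<Longrightarrow> f n \<ge> 0"
    and mono: "\<And>n. n \<ge> 1 \<Longrightarrow> f n \<le> f (Suc n)"
    and diverge: "\<not> summable (\<lambda>n. f (Suc n) / (real (Suc n))\<^sup>2)"
  shows "\<exists>b :: nat \<Rightarrow> rat.
           (\<forall>n m. n \<ge> 1 \<longrightarrow> m \<ge> 1 \<longrightarrow>
              real_of_rat (b (n + m)) \<le> real_of_rat (b n) + real_of_rat (b m) + f (n + m))
         \<and> bij_betw (\<lambda>n. b n / of_nat n) {1..} (UNIV :: rat set)"
proof (intro exI[of _ "\<lambda>n. of_nat n * qq f n"] conjI allI impI)
  fix n m :: nat assume "n \<ge> 1" "m \<ge> 1"
  then show "real_of_rat (of_nat (n + m) * qq f (n + m))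
     \<le> real_of_rat (of_nat n * qq f n) + real_of_rat (of_nat m * qq f m) + f (n + m)"
    using main_ineq[where f=f, OF nonneg mono, of n m] by (simp add: of_rat_mult of_rat_add)
next
  have inj: "inj_on (qq f) {1..}"
  proof (rule inj_onI)
    have key: "qq f i \<noteq> qq f j" if "1 \<le> i" "i < j" for i j
    proof -
      have "qq f i \<in> set (seqL f (j - 1))" using that by (auto simp: set_seqL)
      moreover have "qq f j \<notin> set (seqL f (j - 1))" using qq_new[of f "j-1"] that by simp
      ultimately show ?thesis by metis
    qed
    fix i j assume "i \<in> {1::nat..}" "j \<in> {1..}" "qq f i = qq f j"
    then show "i = j" using key[of i j] key[of j i] by (cases i j rule: linorder_cases) auto
  qed
  have surj: "qq f ` {1..} = UNIV"
  proof (intro set_eqI iffI)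
    fix x :: rat
    obtain N where "\<forall>j<Suc (to_nat x). (from_nat j::rat) \<in> set (seqL f N)"
      using all_placed[where f=f, OF nonneg diverge] by blast
    then have "x \<in> set (seqL f N)" by (metis from_nat_to_nat lessI)
    then show "x \<in> qq f ` {1..}" by (auto simp: set_seqL)
  qed auto
  have "bij_betw (qq f) {1..} UNIV" using inj surj by (simp add: bij_betw_def)
  then show "bij_betw (\<lambda>n. of_nat n * qq f n / of_nat n) {1..} (UNIV :: rat set)"
    by (rule bij_betw_cong[THEN iffD1, rotated]) auto
qed

end
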